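(* Let $q\ge 3$, $s\in\mathbb{N}$, and let $Y_s=\{y_i\}_{i=1}^{2s}$ be any collection of points with $y_{2s}<\cdots<y_1<y_{2s}+2\pi=:y_0$. Then there exists a function $f\in\Delta^{(q)}(Y_s)\cap W^{q-2}$ such that $$E_n^{(q)}(f,Y_s)\ge C(q,Y_s),\qquad n\in\mathbb{N},$$ where $C(q,Y_s)>0$ depends only on $q$ and $Y_s$.
   Context: A function $f\in C[a,b]$ is called $q$-monotone ($q\ge 2$) if $f\in C^{q-2}(a,b)$ and $f^{(q-2)}$ is convex on $(a,b)$. For $Y_s$ as in the claim, $\Delta^{(q)}(Y_s)$ denotes the set of continuous $2\pi$-periodic functions $f:\mathbb{R}\to\mathbb{R}$ such that $(-1)^{i-1}f$ is $q$-monotone on $[y_i,y_{i-1}]$ for each $1\le i\le 2s$. For $r\in\mathbb{N}$, $W^r$ denotes the class of $2\pi$-periodic functions $f$ with $f^{(r-1)}$ locally absolutely continuous on $\mathbb{R}$ and $\operatorname{ess\,sup}_{x\in\mathbb{R}}|f^{(r)}(x)|\le 2$. $\mathcal{T}_n$ is the space of real trigonometric polynomials of degree $\le n$. For a continuous $2\pi$-periodic $g$, $\|g\|=\max_{x\in\mathbb{R}}|g(x)|$, and $E_n^{(q)}(g,Y_s):=\inf_{T_n\in\mathcal{T}_n\cap\Delta^{(q)}(Y_s)}\|g-T_n\|$. *)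

theory Defs
  imports "HOL-Analysis.Analysis"
begin

definition q_monotone_on :: "nat \<Rightarrow> real \<Rightarrow> real \<Rightarrow> (real \<Rightarrow> real) \<Rightarrow> bool" where
  "q_monotone_on q a b f \<longleftrightarrow>
     continuous_on {a..b} f \<and>
     (\<exists>D :: nat \<Rightarrow> real \<Rightarrow> real.
        (\<forall>x\<in>{a<..<b}. D 0 x = f x) \<and>
        (\<forall>k<q-2. \<forall>x\<in>{a<..<b}. (D k has_real_derivative D (Suc k) x) (at x)) \<and>
        continuous_on {a<..<b} (D (q-2)) \<and>
        convex_on {a<..<b} (D (q-2)))"

definition periodic_2pi :: "(real \<Rightarrow> real) \<Rightarrow> bool" where
  "periodic_2pi f \<longleftrightarrow> (\<forall>x. f (x + 2 * pi) = f x)"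

definition admissible_Y :: "nat \<Rightarrow> (nat \<Rightarrow> real) \<Rightarrow> bool" where
  "admissible_Y s y \<longleftrightarrow> s \<ge> 1 \<and> (\<forall>i<2 * s. y (Suc i) < y i) \<and> y 0 = y (2 * s) + 2 * pi"

definition Delta :: "nat \<Rightarrow> nat \<Rightarrow> (nat \<Rightarrow> real) \<Rightarrow> (real \<Rightarrow> real) set" where
  "Delta q s y = {f. continuous_on UNIV f \<and> periodic_2pi f \<and>
      (\<forall>i\<in>{1..2 * s}. q_monotone_on q (y i) (y (i-1)) (\<lambda>x. (-1) ^ (i-1) * f x))}"

definition abs_cont_on :: "real \<Rightarrow> real \<Rightarrow> (real \<Rightarrow> real) \<Rightarrow> bool" where
  "abs_cont_on a b g \<longleftrightarrow>
     (\<forall>\<epsilon>>0. \<exists>\<delta>>0. \<forall>(n::nat) (l::nat \<Rightarrow> real) (u::nat \<Rightarrow> real).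
        (\<forall>k<n. a \<le> l k \<and> l k \<le> u k \<and> u k \<le> b) \<and>
        (\<forall>j<n. \<forall>k<n. j \<noteq> k \<longrightarrow> u j \<le> l k \<or> u k \<le> l j) \<and>
        (\<Sum>k<n. u k - l k) < \<delta> \<longrightarrow>
        (\<Sum>k<n. \<bar>g (u k) - g (l k)\<bar>) < \<epsilon>)"

definition locally_abs_cont :: "(real \<Rightarrow> real) \<Rightarrow> bool" where
  "locally_abs_cont g \<longleftrightarrow> (\<forall>a b. abs_cont_on a b g)"

text \<open>W^r: 2pi-periodic f with f^(r-1) locally absolutely continuous and
  ess sup |f^(r)| \<le> 2 (f^(r) being the a.e. derivative of f^(r-1)).\<close>
definition W :: "nat \<Rightarrow> (real \<Rightarrow> real) set" where
  "W r = {f. periodic_2pi f \<and>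
     (\<exists>D :: nat \<Rightarrow> real \<Rightarrow> real.
        D 0 = f \<and>
        (\<forall>k<r-1. \<forall>x. (D k has_real_derivative D (Suc k) x) (at x)) \<and>
        locally_abs_cont (D (r-1)) \<and>
        (AE x in lborel. \<exists>d. (D (r-1) has_real_derivative d) (at x) \<and> \<bar>d\<bar> \<le> 2))}"

definition trig_poly :: "nat \<Rightarrow> (real \<Rightarrow> real) \<Rightarrow> bool" where
  "trig_poly n T \<longleftrightarrow> (\<exists>a b :: nat \<Rightarrow> real.
     \<forall>x. T x = a 0 + (\<Sum>k=1..n. a k * cos (real k * x) + b k * sin (real k * x)))"

definition sup_norm :: "(real \<Rightarrow> real) \<Rightarrow> real" where
  "sup_norm g = (SUP x. \<bar>g x\<bar>)"

definition E_shape :: "nat \<Rightarrow> nat \<Rightarrow> nat \<Rightarrow> (nat \<Rightarrow> real) \<Rightarrow> (real \<Rightarrow> real) \<Rightarrow> real" where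
  "E_shape n q s y g = (INF T \<in> {T. trig_poly n T \<and> T \<in> Delta q s y}. sup_norm (\<lambda>x. g x - T x))"

end

theory Submission
  imports Defs
begin


fun fdiff :: "nat \<Rightarrow> real \<Rightarrow> (real \<Rightarrow> real) \<Rightarrow> real \<Rightarrow> real" where
  "fdiff 0 h g x = g x"
| "fdiff (Suc m) h g x = fdiff m h g (x + h) - fdiff m h g x"

lemma fdiff_bound:
  assumes "\<And>z. \<bar>g z\<bar> \<le> B"
  shows "\<bar>fdiff m h g x\<bar> \<le> 2 ^ m * B"
proof (induction m arbitrary: x)
  case 0 then show ?case using assms by simp
next
  case (Suc m)
  have "\<bar>fdiff m h g (x + h) - fdiff m h g x\<bar> \<le> \<bar>fdiff m h g (x + h)\<bar> + \<bar>fdiff m h g x\<bar>" by linarith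
  also have "\<dots> \<le> 2 ^ m * B + 2 ^ m * B" using Suc[of "x+h"] Suc[of x] by linarith
  finally show ?case by (simp add: algebra_simps)
qed

lemma fdiff_diff: "fdiff m h (\<lambda>z. f z - g z) x = fdiff m h f x - fdiff m h g x"
  by (induction m arbitrary: x) auto

lemma fdiff_local:
  assumes "h \<ge> 0" "\<And>z. x \<le> z \<Longrightarrow> z \<le> x + real m * h \<Longrightarrow> f z = g z"
  shows "fdiff m h f x = fdiff m h g x"
  using assms
proof (induction m arbitrary: x)
  case 0 then show ?case by simp
next
  case (Suc m)
  have a: "fdiff m h f (x + h) = fdiff m h g (x + h)"
    by (rule Suc.IH) (use Suc.prems in \<open>auto simp: algebra_simps\<close>)
  have b: "fdiff m h f x = fdiff m h g x"
    apply (rule Suc.IH) using Suc.prems by (auto simp: algebra_simps)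
  show ?case using a b by simp
qed

lemma fdiff_deriv:
  assumes "h \<ge> 0" "\<And>w. z \<le> w \<Longrightarrow> w \<le> z + real m * h \<Longrightarrow> (g has_real_derivative g' w) (at w)"
  shows "((\<lambda>z. fdiff m h g z) has_real_derivative fdiff m h g' z) (at z)"
  using assms
proof (induction m arbitrary: z)
  case 0 then show ?case by simp
next
  case (Suc m)
  have a: "((\<lambda>z. fdiff m h g z) has_real_derivative fdiff m h g' (z + h)) (at (z + h))"
    by (rule Suc.IH) (use Suc.prems in \<open>auto simp: algebra_simps\<close>)
  have a2: "((\<lambda>z. fdiff m h g (z + h)) has_real_derivative fdiff m h g' (z + h)) (at z)"
    using a DERIV_shift by blast
  have b: "((\<lambda>z. fdiff m h g z) has_real_derivative fdiff m h g' z) (at z)"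
    apply (rule Suc.IH) using Suc.prems by (auto simp: algebra_simps)
  show ?case using DERIV_diff[OF a2 b] by simp
qed

lemma fdiff_mvt:
  assumes "h > 0" "\<And>k w. k < m \<Longrightarrow> (g k has_real_derivative g (Suc k) w) (at w)"
  shows "\<exists>\<xi>. x \<le> \<xi> \<and> \<xi> \<le> x + real m * h \<and> fdiff m h (g 0) x = h ^ m * g m \<xi>"
  using assms
proof (induction m arbitrary: g x)
  case 0 then show ?case by auto
next
  case (Suc m)
  have d: "\<And>w. ((\<lambda>z. fdiff m h (g 0) z) has_real_derivative fdiff m h (g 1) w) (at w)"
    by (rule fdiff_deriv) (use Suc.prems in auto)
  obtain \<eta> where \<eta>: "x < \<eta>" "\<eta> < x + h"
    "fdiff m h (g 0) (x + h) - fdiff m h (g 0) x = (x + h - x) * fdiff m h (g 1) \<eta>"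
    using MVT2[of x "x + h" "\<lambda>z. fdiff m h (g 0) z" "\<lambda>w. fdiff m h (g 1) w"] d Suc.prems(1) by auto
  have "\<exists>\<xi>. \<eta> \<le> \<xi> \<and> \<xi> \<le> \<eta> + real m * h \<and> fdiff m h ((\<lambda>k. g (Suc k)) 0) \<eta> = h ^ m * (\<lambda>k. g (Suc k)) m \<xi>"
    by (rule Suc.IH) (use Suc.prems in auto)
  then obtain \<xi> where \<xi>: "\<eta> \<le> \<xi>" "\<xi> \<le> \<eta> + real m * h" "fdiff m h (g 1) \<eta> = h ^ m * g (Suc m) \<xi>"
    by auto
  show ?case
    apply (rule exI[of _ \<xi>])
    using \<eta> \<xi> by (auto simp: algebra_simps)
qed



lemma construct_p:
  assumes "m \<ge> 1"
  shows "\<exists>p :: nat \<Rightarrow> real \<Rightarrow> real.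
    (\<forall>k<m. \<forall>t. (p k has_real_derivative p (Suc k) t) (at t)) \<and>
    (\<forall>k<m. p k 0 = p k (2*pi)) \<and> (\<forall>t. p m t = (pi - t)/2) \<and>
    (\<exists>c. \<forall>t. p (m-1) t = t*(2*pi - t)/4 + c)"
  using assms
proof (induction m rule: nat_induct_at_least)
  case base
  define p :: "nat \<Rightarrow> real \<Rightarrow> real" where "p = (\<lambda>k t. if k = 0 then t*(2*pi - t)/4 else (pi - t)/2)"
  have "(p 0 has_real_derivative p 1 t) (at t)" for t
    unfolding p_def by (auto intro!: derivative_eq_intros simp: field_simps)
  then show ?case
    by (intro exI[of _ p]) (auto simp: p_def)
next
  case (Suc m)
  then obtain p c where pd: "\<forall>k<m. \<forall>t. (p k has_real_derivative p (Suc k) t) (at t)"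
    and pp: "\<forall>k<m. p k 0 = p k (2*pi)" and pm: "\<forall>t. p m t = (pi - t)/2"
    and pc: "\<forall>t. p (m-1) t = t*(2*pi - t)/4 + c" by blast
  have cont: "isCont (p 0) x" for x
    using pd Suc.hyps by (meson DERIV_isCont less_le_trans zero_less_one)
  obtain G where G: "\<And>x::real. (G has_vector_derivative p 0 x) (at x)"
    using einterval_antiderivative[of "-\<infinity>" "\<infinity>" "p 0"] cont by auto
  define cc where "cc = (G (2*pi) - G 0) / (2*pi)"
  define q :: "nat \<Rightarrow> real \<Rightarrow> real" where
    "q = (\<lambda>k t. if k = 0 then G t - cc * t else if k = 1 then p 0 t - cc else p (k-1) t)"
  have q0: "(q 0 has_real_derivative q 1 t) (at t)" for t
  proof -
    have "(G has_real_derivative p 0 t) (at t)"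
      using G has_real_derivative_iff_has_vector_derivative by blast
    then have "((\<lambda>t. G t - cc * t) has_real_derivative p 0 t - cc) (at t)"
      by (auto intro!: derivative_eq_intros)
    then show ?thesis by (simp add: q_def)
  qed
  have q1: "k < Suc m \<Longrightarrow> k \<ge> 1 \<Longrightarrow> (q k has_real_derivative q (Suc k) t) (at t)" for k t
  proof -
    assume k: "k < Suc m" "k \<ge> 1"
    have "(p (k-1) has_real_derivative p k t) (at t)" using pd k
      by (metis Suc_pred' diff_less_Suc le_less_trans less_imp_diff_less linorder_not_le not_less_eq zero_less_one)
    then have "((\<lambda>t. p (k-1) t - (if k = 1 then cc else 0)) has_real_derivative p k t) (at t)"
      by (auto intro!: derivative_eq_intros)
    moreover have "q k = (\<lambda>t. p (k-1) t - (if k = 1 then cc else 0))" using k by (auto simp: q_def)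
    moreover have "q (Suc k) t = p k t" using k by (simp add: q_def)
    ultimately show ?thesis by simp
  qed
  have qd: "\<forall>k<Suc m. \<forall>t. (q k has_real_derivative q (Suc k) t) (at t)"
    using q0 q1 by (metis One_nat_def Suc_leI not_gr0)
  have qp: "\<forall>k<Suc m. q k 0 = q k (2*pi)"
  proof (intro allI impI)
    fix k assume k: "k < Suc m"
    show "q k 0 = q k (2*pi)"
    proof (cases "k = 0")
      case True then show ?thesis by (simp add: q_def cc_def)
    next
      case False
      then have "k - 1 < m" using k by auto
      then show ?thesis using pp False by (auto simp: q_def)
    qed
  qed
  have qm: "\<forall>t. q (Suc m) t = (pi - t)/2" using pm Suc.hyps by (auto simp: q_def)
  have qc: "\<exists>c. \<forall>t. q (Suc m - 1) t = t*(2*pi - t)/4 + c"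
  proof (cases "m = 1")
    case True then show ?thesis using pc by (intro exI[of _ "c - cc"]) (auto simp: q_def)
  next
    case False then show ?thesis using pc Suc.hyps by (intro exI[of _ c]) (auto simp: q_def)
  qed
  show ?case using qd qp qm qc by blast
qed



lemma deriv_shift_sub:
  assumes "(p has_real_derivative d) (at (x - a))"
  shows "((\<lambda>x. p (x - a)) has_real_derivative d) (at x)"
  using DERIV_shift[of p d x "-a"] assms by simp

lemma glue_deriv:
  fixes F ga gb :: "real \<Rightarrow> real"
  assumes d1: "(ga has_real_derivative d) (at x0)" and d2: "(gb has_real_derivative d) (at x0)"
    and e1: "ga x0 = F x0" and e2: "gb x0 = F x0" and "\<delta> > 0"
    and l: "\<And>x. x0 - \<delta> < x \<Longrightarrow> x < x0 \<Longrightarrow> F x = ga x"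
    and r: "\<And>x. x0 < x \<Longrightarrow> x < x0 + \<delta> \<Longrightarrow> F x = gb x"
  shows "(F has_real_derivative d) (at x0)"
proof -
  have t1: "((\<lambda>y. (ga y - ga x0) / (y - x0)) \<longlongrightarrow> d) (at_left x0)"
    using d1 unfolding has_field_derivative_iff filterlim_at_split by blast
  have t2: "((\<lambda>y. (gb y - gb x0) / (y - x0)) \<longlongrightarrow> d) (at_right x0)"
    using d2 unfolding has_field_derivative_iff filterlim_at_split by blast
  have ev1: "eventually (\<lambda>y. (ga y - ga x0) / (y - x0) = (F y - F x0) / (y - x0)) (at_left x0)"
    using eventually_at_left_real[of "x0 - \<delta>" x0] \<open>\<delta> > 0\<close>
    by (smt (verit) e1 eventually_mono greaterThanLessThan_iff l)
  have ev2: "eventually (\<lambda>y. (gb y - gb x0) / (y - x0) = (F y - F x0) / (y - x0)) (at_right x0)"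
    using eventually_at_right_real[of x0 "x0 + \<delta>"] \<open>\<delta> > 0\<close>
    by (smt (verit) e2 eventually_mono greaterThanLessThan_iff r)
  have "((\<lambda>y. (F y - F x0) / (y - x0)) \<longlongrightarrow> d) (at_left x0)"
    using tendsto_cong[OF ev1] t1 by blast
  moreover have "((\<lambda>y. (F y - F x0) / (y - x0)) \<longlongrightarrow> d) (at_right x0)"
    using tendsto_cong[OF ev2] t2 by blast
  ultimately show ?thesis unfolding has_field_derivative_iff filterlim_at_split by blast
qed

definition tau :: "real \<Rightarrow> real \<Rightarrow> real" where
  "tau c x = x - c - 2*pi * of_int \<lfloor>(x - c)/(2*pi)\<rfloor>"

lemma tau_eq:
  assumes "c + 2*pi * of_int N \<le> x" "x < c + 2*pi*(of_int N + 1)"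
  shows "tau c x = x - c - 2*pi * of_int N"
proof -
  have "\<lfloor>(x - c)/(2*pi)\<rfloor> = N"
    unfolding floor_eq_iff using assms pi_gt_zero by (auto simp: field_simps)
  then show ?thesis by (simp add: tau_def)
qed

lemma tau_floor:
  fixes x c :: real
  defines "N \<equiv> \<lfloor>(x - c)/(2*pi)\<rfloor>"
  shows "c + 2*pi * of_int N \<le> x" "x < c + 2*pi*(of_int N + 1)"
proof -
  have a: "of_int N \<le> (x - c)/(2*pi)" "(x - c)/(2*pi) < of_int N + 1"
    unfolding N_def by linarith+
  show "c + 2*pi * of_int N \<le> x" using a(1) pi_gt_zero by (simp add: field_simps)
  show "x < c + 2*pi*(of_int N + 1)" using a(2) pi_gt_zero by (simp add: field_simps)
qed

lemma tau_range: "0 \<le> tau c x" "tau c x < 2*pi"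
  using tau_floor[where x="x" and c="c"] by (auto simp: tau_def algebra_simps)

lemma tau_periodic: "tau c (x + 2*pi) = tau c x"
proof -
  have "(x + 2*pi - c)/(2*pi) = (x - c)/(2*pi) + 1" using pi_gt_zero by (simp add: field_simps)
  then have "\<lfloor>(x + 2*pi - c)/(2*pi)\<rfloor> = \<lfloor>(x - c)/(2*pi)\<rfloor> + 1" by simp
  then show ?thesis by (simp add: tau_def algebra_simps)
qed

lemma F_deriv:
  assumes pd: "\<forall>k<m. \<forall>t. (p k has_real_derivative p (Suc k) t) (at t)"
    and pp: "\<forall>k<m. p k 0 = p k (2*pi)"
    and k: "k < m" and glue: "Suc k < m \<or> (\<forall>N::int. x \<noteq> c + 2*pi * of_int N)"
  shows "((\<lambda>x. p k (tau c x)) has_real_derivative p (Suc k) (tau c x)) (at x)"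
proof -
  define N where "N = \<lfloor>(x - c)/(2*pi)\<rfloor>"
  have N1: "c + 2*pi * of_int N \<le> x" and N2: "x < c + 2*pi*(of_int N + 1)"
    using tau_floor[where x="x" and c="c"] by (auto simp: N_def)
  have tx: "tau c x = x - c - 2*pi * of_int N" using tau_eq[OF N1 N2] .
  have dg: "((\<lambda>x. p k (x - (c + 2*pi * of_int M))) has_real_derivative p (Suc k) (x - (c + 2*pi * of_int M))) (at x)" for M
    by (rule deriv_shift_sub) (use pd k in auto)
  show ?thesis
  proof (cases "x = c + 2*pi * of_int N")
    case False
    then have N1': "c + 2*pi * of_int N < x" using N1 by auto
    let ?S = "{c + 2*pi * of_int N <..< c + 2*pi*(of_int N + 1)}"
    have "x \<in> ?S" using N1' N2 by auto
    moreover have "\<And>z. z \<in> ?S \<Longrightarrow> p k (z - (c + 2*pi * of_int N)) = p k (tau c z)"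
    proof -
      fix z assume "z \<in> ?S"
      then have "tau c z = z - c - 2*pi * of_int N" by (intro tau_eq) auto
      then have "z - (c + 2*pi * of_int N) = tau c z" by simp
      then show "p k (z - (c + 2*pi * of_int N)) = p k (tau c z)" by simp
    qed
    ultimately have "((\<lambda>x. p k (tau c x)) has_real_derivative p (Suc k) (x - (c + 2*pi * of_int N))) (at x)"
      using has_field_derivative_transform_within_open[OF dg[of N], of ?S] by auto
    moreover have "x - (c + 2*pi * of_int N) = tau c x" using tx by simp
    ultimately show ?thesis by simp
  next
    case True
    then have Sk: "Suc k < m" using glue by auto
    have tx0: "tau c x = 0" using tx True by simp
    have e: "p (Suc k) (x - (c + 2*pi * of_int (N-1))) = p (Suc k) (tau c x)"
      using True tx0 pp Sk by (simp add: algebra_simps)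
    show ?thesis
    proof (rule glue_deriv[where ga = "\<lambda>x. p k (x - (c + 2*pi * of_int (N - 1)))"
          and gb = "\<lambda>x. p k (x - (c + 2*pi * of_int N))" and \<delta> = "2*pi"])
      show "((\<lambda>x. p k (x - (c + 2 * pi * real_of_int (N - 1)))) has_real_derivative p (Suc k) (tau c x)) (at x)"
        using dg[of "N-1"] e by simp
      show "((\<lambda>x. p k (x - (c + 2 * pi * real_of_int N))) has_real_derivative p (Suc k) (tau c x)) (at x)"
      proof -
        have "x - (c + 2*pi * of_int N) = tau c x" using tx by simp
        then show ?thesis using dg[of N] by simp
      qed
      show "p k (x - (c + 2 * pi * real_of_int (N - 1))) = p k (tau c x)"
        using True tx0 pp k by (simp add: algebra_simps)
      show "p k (x - (c + 2 * pi * real_of_int N)) = p k (tau c x)"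
      proof -
        have "x - (c + 2*pi * of_int N) = tau c x" using tx by simp
        then show ?thesis by simp
      qed
      show "0 < 2*pi" by simp
      show "p k (tau c z) = p k (z - (c + 2 * pi * real_of_int (N - 1)))" if "x - 2*pi < z" "z < x" for z
      proof -
        have "tau c z = z - c - 2*pi * of_int (N - 1)" using that True by (intro tau_eq) (auto simp: algebra_simps)
        then have "z - (c + 2 * pi * real_of_int (N - 1)) = tau c z" by simp
        then show ?thesis by simp
      qed
      show "p k (tau c z) = p k (z - (c + 2 * pi * real_of_int N))" if "x < z" "z < x + 2*pi" for z
      proof -
        have "tau c z = z - c - 2*pi * of_int N" using that True by (intro tau_eq) (auto simp: algebra_simps)
        then have "z - (c + 2 * pi * real_of_int N) = tau c z" by simp
        then show ?thesis by simp
      qed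
    qed
  qed
qed

lemma phi_lip:
  fixes c :: real
  defines "\<phi> \<equiv> \<lambda>t::real. t*(2*pi - t)/4"
  shows "\<bar>\<phi> (tau c u) - \<phi> (tau c l)\<bar> \<le> 2 * \<bar>u - l\<bar>"
proof -
  have bnd: "0 \<le> \<phi> a \<and> \<phi> a \<le> 2 * a \<and> \<phi> a \<le> 2 * (2*pi - a)" if "0 \<le> a" "a \<le> 2*pi" for a
  proof -
    have "a*(2*pi - a) \<le> a * 8" using that pi_less_4 by (intro mult_left_mono) auto
    moreover have "a*(2*pi - a) \<le> 8 * (2*pi - a)" using that pi_less_4 by (intro mult_right_mono) auto
    ultimately show ?thesis using that by (auto simp: \<phi>_def)
  qed
  have main: "\<bar>\<phi> (tau c u) - \<phi> (tau c l)\<bar> \<le> 2 * (u - l)" if lu: "l \<le> u" for l u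
  proof -
    define Nl where "Nl = \<lfloor>(l - c)/(2*pi)\<rfloor>"
    define Nu where "Nu = \<lfloor>(u - c)/(2*pi)\<rfloor>"
    have l1: "c + 2*pi * of_int Nl \<le> l" "l < c + 2*pi*(of_int Nl + 1)"
      using tau_floor[where x="l" and c="c"] by (auto simp: Nl_def)
    have u1: "c + 2*pi * of_int Nu \<le> u" "u < c + 2*pi*(of_int Nu + 1)"
      using tau_floor[where x="u" and c="c"] by (auto simp: Nu_def)
    have tl: "tau c l = l - c - 2*pi * of_int Nl" using tau_eq[OF l1] .
    have tu: "tau c u = u - c - 2*pi * of_int Nu" using tau_eq[OF u1] .
    have NN: "Nl \<le> Nu" unfolding Nl_def Nu_def using lu pi_gt_zero
      by (intro floor_mono divide_right_mono) auto
    show ?thesis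
    proof (cases "Nl = Nu")
      case True
      define a where "a = tau c u"
      define b where "b = tau c l"
      have ab: "a - b = u - l" using tl tu True by (simp add: a_def b_def)
      have ar: "0 \<le> a" "a < 2*pi" "0 \<le> b" "b < 2*pi" using tau_range a_def b_def by auto
      have "\<phi> a - \<phi> b = (a - b) * (2*pi - a - b) / 4" by (simp add: \<phi>_def field_simps)
      moreover have "\<bar>(a - b) * (2*pi - a - b)\<bar> \<le> (a - b) * 8"
      proof -
        have "\<bar>2*pi - a - b\<bar> \<le> 8" using ar pi_less_4 by auto
        then have "\<bar>a - b\<bar> * \<bar>2*pi - a - b\<bar> \<le> \<bar>a - b\<bar> * 8" by (intro mult_left_mono) auto
        then show ?thesis using ab lu by (simp add: abs_mult)
      qed
      ultimately show ?thesis using ab by (simp add: a_def b_def)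
    next
      case False
      then have NN': "of_int Nl + 1 \<le> (of_int Nu :: real)" using NN by linarith
      define g where "g = c + 2*pi * of_int Nu"
      have "2*pi*(of_int Nl + 1) \<le> 2*pi * of_int Nu" using NN' by simp
      then have h1: "2*pi - tau c l \<le> g - l" using tl by (simp add: g_def algebra_simps)
      have h2: "tau c u = u - g" using tu by (simp add: g_def)
      have "0 \<le> \<phi> (tau c u)" "\<phi> (tau c u) \<le> 2 * (u - g)"
        using bnd[of "tau c u"] tau_range[of c u] h2 by auto
      moreover have "0 \<le> \<phi> (tau c l)" "\<phi> (tau c l) \<le> 2 * (g - l)"
        using bnd[of "tau c l"] tau_range[of c l] h1 by auto
      ultimately show ?thesis by auto
    qed
  qed
  show ?thesis
  proof (cases "l \<le> u")
    case True then show ?thesis using main[OF True] by simp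
  next
    case False then show ?thesis using main[of u l] by simp
  qed
qed



definition TD :: "(nat \<Rightarrow> real) \<Rightarrow> (nat \<Rightarrow> real) \<Rightarrow> nat \<Rightarrow> nat \<Rightarrow> real \<Rightarrow> real" where
  "TD a b n j x = (if j = 0 then a 0 else 0) +
     (\<Sum>k=1..n. real k ^ j * (a k * cos (real k * x + real j * pi / 2) + b k * sin (real k * x + real j * pi / 2)))"

lemma TD_0: "TD a b n 0 x = a 0 + (\<Sum>k=1..n. a k * cos (real k * x) + b k * sin (real k * x))"
  by (simp add: TD_def)

lemma TD_term_deriv:
  "((\<lambda>x. r * (A * cos (k * x + c) + B * sin (k * x + c))) has_real_derivative
     r * k * (A * cos (k * x + c + pi/2) + B * sin (k * x + c + pi/2))) (at x)"
proof -
  have "((\<lambda>x. r * (A * cos (k * x + c) + B * sin (k * x + c))) has_real_derivative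
     r * (A * (- sin (k * x + c) * k) + B * (cos (k * x + c) * k))) (at x)"
    by (rule derivative_eq_intros refl | simp)+
  moreover have "cos (k * x + c + pi/2) = - sin (k * x + c)" by (simp add: cos_add)
  moreover have "sin (k * x + c + pi/2) = cos (k * x + c)" by (simp add: sin_add)
  ultimately show ?thesis by (simp add: algebra_simps)
qed

lemma TD_deriv: "(TD a b n j has_real_derivative TD a b n (Suc j) x) (at x)"
proof -
  have e: "real k * x + real (Suc j) * pi / 2 = real k * x + real j * pi / 2 + pi / 2" for k by (simp add: field_simps)
  have "((\<lambda>x. \<Sum>k=1..n. real k ^ j * (a k * cos (real k * x + real j * pi / 2) + b k * sin (real k * x + real j * pi / 2)))
     has_real_derivative
     (\<Sum>k=1..n. real k ^ j * real k * (a k * cos (real k * x + real j * pi / 2 + pi/2) + b k * sin (real k * x + real j * pi / 2 + pi/2)))) (at x)"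
    by (rule DERIV_sum) (rule TD_term_deriv)
  then have "((\<lambda>x. (if j = 0 then a 0 else 0) + (\<Sum>k=1..n. real k ^ j * (a k * cos (real k * x + real j * pi / 2) + b k * sin (real k * x + real j * pi / 2))))
     has_real_derivative
     0 + (\<Sum>k=1..n. real k ^ j * real k * (a k * cos (real k * x + real j * pi / 2 + pi/2) + b k * sin (real k * x + real j * pi / 2 + pi/2)))) (at x)"
    by (intro DERIV_add) auto
  moreover have "0 + (\<Sum>k=1..n. real k ^ j * real k * (a k * cos (real k * x + real j * pi / 2 + pi/2) + b k * sin (real k * x + real j * pi / 2 + pi/2)))
     = TD a b n (Suc j) x"
    unfolding TD_def e by (simp add: mult.commute)
  ultimately show ?thesis unfolding TD_def[abs_def] by simp
qed

lemma TD_bound: "\<exists>B. \<forall>x. \<bar>TD a b n 0 x\<bar> \<le> B"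
proof -
  have "\<bar>TD a b n 0 x\<bar> \<le> \<bar>a 0\<bar> + (\<Sum>k=1..n. \<bar>a k\<bar> + \<bar>b k\<bar>)" for x
  proof -
    have "\<bar>TD a b n 0 x\<bar> \<le> \<bar>a 0\<bar> + \<bar>\<Sum>k=1..n. a k * cos (real k * x) + b k * sin (real k * x)\<bar>"
      unfolding TD_0 by linarith
    also have "\<dots> \<le> \<bar>a 0\<bar> + (\<Sum>k=1..n. \<bar>a k * cos (real k * x) + b k * sin (real k * x)\<bar>)"
      using sum_abs by (intro add_left_mono) blast
    also have "\<dots> \<le> \<bar>a 0\<bar> + (\<Sum>k=1..n. \<bar>a k\<bar> + \<bar>b k\<bar>)"
    proof (intro add_left_mono sum_mono)
      fix k
      have "\<bar>a k * cos (real k * x)\<bar> \<le> \<bar>a k\<bar>" by (simp add: abs_mult mult_left_le)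
      moreover have "\<bar>b k * sin (real k * x)\<bar> \<le> \<bar>b k\<bar>" by (simp add: abs_mult mult_left_le)
      ultimately show "\<bar>a k * cos (real k * x) + b k * sin (real k * x)\<bar> \<le> \<bar>a k\<bar> + \<bar>b k\<bar>" by linarith
    qed
    finally show ?thesis .
  qed
  then show ?thesis by blast
qed

lemma deriv_family_unique:
  assumes "open S"
    and D0: "\<And>x. x \<in> S \<Longrightarrow> D 0 x = \<sigma> * G 0 x"
    and Dd: "\<And>k x. k < m \<Longrightarrow> x \<in> S \<Longrightarrow> (D k has_real_derivative D (Suc k) x) (at x)"
    and Gd: "\<And>k x. k < m \<Longrightarrow> (G k has_real_derivative G (Suc k) x) (at x)"
  shows "k \<le> m \<Longrightarrow> x \<in> S \<Longrightarrow> D k x = \<sigma> * G k x"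
proof (induction k arbitrary: x)
  case 0 then show ?case using D0 by simp
next
  case (Suc k)
  have k: "k < m" using Suc.prems by simp
  have "((\<lambda>x. \<sigma> * G k x) has_real_derivative \<sigma> * G (Suc k) x) (at x)"
    using Gd[OF k] by (auto intro!: derivative_eq_intros)
  then have "(D k has_real_derivative \<sigma> * G (Suc k) x) (at x)"
    using has_field_derivative_transform_within_open[of "\<lambda>x. \<sigma> * G k x" _ x S "D k"] Suc.IH k Suc.prems assms(1)
    by auto
  then show ?case using Dd[OF k Suc.prems(2)] DERIV_unique by blast
qed

lemma convex_three:
  assumes "convex_on S w" "x < y" "y < z" "x \<in> S" "z \<in> S" "convex S"
  shows "(z - x) * w y \<le> (z - y) * w x + (y - x) * w z"
proof -
  have sub: "{x..z} \<subseteq> S" using assms convex_contains_segment[of S] closed_segment_eq_real_ivl[of x z] by auto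
  have "convex_on {x..z} w" using convex_on_subset[OF assms(1) sub] by simp
  then have "w y \<le> (w z - w x) / (z - x) * (y - x) + w x"
    using convex_onD_Icc'[of x z w y] assms by auto
  then have "(z - x) * w y \<le> (z - x) * ((w z - w x) / (z - x) * (y - x) + w x)"
    using assms by (intro mult_left_mono) auto
  also have "\<dots> = (z - y) * w x + (y - x) * w z" using assms by (simp add: field_simps)
  finally show ?thesis .
qed

lemma limit_right_ge:
  fixes \<Phi> :: "real \<Rightarrow> real" and c d :: real
  assumes "isCont \<Phi> c" "c < d" "\<And>z. c < z \<Longrightarrow> z < d \<Longrightarrow> 0 \<le> \<Phi> z"
  shows "0 \<le> \<Phi> c"
proof -
  have "(\<Phi> \<longlongrightarrow> \<Phi> c) (at_right c)" using assms(1) unfolding isCont_def filterlim_at_split by blast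
  moreover have "eventually (\<lambda>z. 0 \<le> \<Phi> z) (at_right c)"
    using eventually_at_right_real[OF assms(2)] assms(3) by (auto elim: eventually_mono)
  ultimately show ?thesis by (rule tendsto_lowerbound) simp
qed

lemma limit_left_ge:
  fixes \<Phi> :: "real \<Rightarrow> real" and c d :: real
  assumes "isCont \<Phi> c" "d < c" "\<And>z. d < z \<Longrightarrow> z < c \<Longrightarrow> 0 \<le> \<Phi> z"
  shows "0 \<le> \<Phi> c"
proof -
  have "(\<Phi> \<longlongrightarrow> \<Phi> c) (at_left c)" using assms(1) unfolding isCont_def filterlim_at_split by blast
  moreover have "eventually (\<lambda>z. 0 \<le> \<Phi> z) (at_left c)"
    using eventually_at_left_real[OF assms(2)] assms(3) by (auto elim: eventually_mono)
  ultimately show ?thesis by (rule tendsto_lowerbound) simp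
qed



lemma final_arith:
  fixes H \<eta> U u1 u2 u3 u4 v1 v2 v3 v4 x1 x2 x3 x4 y1 :: real
  assumes H: "0 < H" "H \<le> 1/2" and eta: "0 \<le> \<eta>"
    and R: "0 \<le> (x4 - x3) * U + (x3 - y1) * u4 - (x4 - y1) * u3"
    and L: "0 \<le> (x2 - x1) * (- U) + (y1 - x2) * (- u1) - (y1 - x1) * (- u2)"
    and d1: "\<bar>v1 - u1\<bar> \<le> \<eta>" and d2: "\<bar>v2 - u2\<bar> \<le> \<eta>" and d3: "\<bar>v3 - u3\<bar> \<le> \<eta>" and d4: "\<bar>v4 - u4\<bar> \<le> \<eta>"
    and v43: "v4 \<le> v3" and v21: "v2 \<le> v1" and v3: "(pi - 2*H)/2 \<le> v3" and v2: "v2 \<le> (-pi + 2*H)/2"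
    and x3: "y1 + H \<le> x3" "x3 \<le> y1 + 2*H" and x4: "y1 + 3*H \<le> x4"
    and x2: "y1 - 2*H \<le> x2" "x2 \<le> y1 - H" and x1: "x1 \<le> y1 - 3*H"
  shows "pi - 2*H \<le> 10 * \<eta>"
proof -
  have R': "(x4 - x3) * (u3 - U) \<le> (x3 - y1) * (u4 - u3)" using R by (simp add: algebra_simps)
  have a1: "u4 - u3 \<le> 2 * \<eta>" using d3 d4 v43 by linarith
  have a2: "(x3 - y1) * (u4 - u3) \<le> (2*H) * (2*\<eta>)"
  proof -
    have "(x3 - y1) * (u4 - u3) \<le> (x3 - y1) * (2*\<eta>)" using a1 x3 H by (intro mult_left_mono) auto
    also have "\<dots> \<le> (2*H) * (2*\<eta>)" using x3 eta by (intro mult_right_mono) auto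
    finally show ?thesis .
  qed
  have a3: "u3 - U \<le> 4 * \<eta>"
  proof (rule ccontr)
    assume "\<not> u3 - U \<le> 4 * \<eta>"
    then have "4 * \<eta> < u3 - U" by simp
    then have "H * (4 * \<eta>) < H * (u3 - U)" using H by simp
    also have "\<dots> \<le> (x4 - x3) * (u3 - U)" using x3 x4 \<open>4 * \<eta> < u3 - U\<close> eta by (intro mult_right_mono) auto
    finally show False using R' a2 by simp
  qed
  have L': "(x2 - x1) * (U - u2) \<le> (y1 - x2) * (u2 - u1)" using L by (simp add: algebra_simps)
  have b1: "u2 - u1 \<le> 2 * \<eta>" using d1 d2 v21 by linarith
  have b2: "(y1 - x2) * (u2 - u1) \<le> (2*H) * (2*\<eta>)"
  proof -
    have "(y1 - x2) * (u2 - u1) \<le> (y1 - x2) * (2*\<eta>)" using b1 x2 H by (intro mult_left_mono) auto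
    also have "\<dots> \<le> (2*H) * (2*\<eta>)" using x2 eta by (intro mult_right_mono) auto
    finally show ?thesis .
  qed
  have b3: "U - u2 \<le> 4 * \<eta>"
  proof (rule ccontr)
    assume "\<not> U - u2 \<le> 4 * \<eta>"
    then have "4 * \<eta> < U - u2" by simp
    then have "H * (4 * \<eta>) < H * (U - u2)" using H by simp
    also have "\<dots> \<le> (x2 - x1) * (U - u2)" using x1 x2 \<open>4 * \<eta> < U - u2\<close> eta by (intro mult_right_mono) auto
    finally show False using L' b2 by simp
  qed
  have "v3 - u3 \<le> \<eta>" "u2 - v2 \<le> \<eta>" using d2 d3 by auto
  then show ?thesis using a3 b3 v2 v3 by (simp add: field_simps)
qed



lemma y_mono:
  assumes "admissible_Y s y" "i \<le> j" "j \<le> 2 * s"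
  shows "y j \<le> y i"
  using assms(2,3)
proof (induction j)
  case 0 then show ?case by simp
next
  case (Suc j)
  show ?case
  proof (cases "i = Suc j")
    case True then show ?thesis by simp
  next
    case False
    then have "i \<le> j" using Suc.prems by simp
    then have "y j \<le> y i" using Suc by simp
    moreover have "y (Suc j) < y j" using assms(1) Suc.prems unfolding admissible_Y_def by auto
    ultimately show ?thesis by simp
  qed
qed

lemma affine_convex: "convex S \<Longrightarrow> convex_on S (\<lambda>x::real. A * x + B)"
  by (rule convex_on_linorderI) (auto simp: algebra_simps)

lemma zero_Delta: "(\<lambda>x. 0) \<in> Delta q s y"
proof -
  have "q_monotone_on q (y i) (y (i-1)) (\<lambda>x. (-1) ^ (i-1) * 0)" for i
    unfolding q_monotone_on_def
    by (rule conjI, simp, rule exI[of _ "\<lambda>k x. 0"]) (auto simp: convex_on_const)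
  then show ?thesis unfolding Delta_def periodic_2pi_def by auto
qed

lemma abs_div_helper:
  fixes h v u X :: real
  assumes "h > 0" "\<bar>h * v - h * u\<bar> \<le> X"
  shows "\<bar>v - u\<bar> \<le> X / h"
proof -
  have "\<bar>h * v - h * u\<bar> = h * \<bar>v - u\<bar>" using assms(1) by (simp add: right_diff_distrib[symmetric] abs_mult)
  then show ?thesis using assms by (simp add: pos_le_divide_eq mult.commute)
qed



lemma convex_on_eq:
  assumes "convex_on S f" "\<And>x. x \<in> S \<Longrightarrow> f x = g x" "convex S"
  shows "convex_on S g"
proof -
  have "g ((1 - t) *\<^sub>R x + t *\<^sub>R z) \<le> (1 - t) * g x + t * g z"
    if "0 \<le> t" "t \<le> 1" "x \<in> S" "z \<in> S" for t x z
  proof -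
    have "(1 - t) *\<^sub>R x + t *\<^sub>R z \<in> S" using convexD[OF assms(3) that(3) that(4), of "1-t" t] that by simp
    then show ?thesis using convex_onD[OF assms(1) that] assms(2) that by simp
  qed
  then show ?thesis using assms(3) by (intro convex_onI) auto
qed

theorem theorem1p3:
  fixes q s :: nat and y :: "nat \<Rightarrow> real"
  assumes "q \<ge> 3" and "admissible_Y s y"
  shows "\<exists>f. f \<in> Delta q s y \<and> f \<in> W (q - 2) \<and>
           (\<exists>C>0. \<forall>n\<ge>1. E_shape n q s y f \<ge> C)"
proof -
  define m where "m = q - 2"
  have m1: "m \<ge> 1" using assms(1) by (simp add: m_def)
  obtain p where pd: "\<forall>k<m. \<forall>t. (p k has_real_derivative p (Suc k) t) (at t)"
    and pp: "\<forall>k<m. p k 0 = p k (2*pi)" and pm: "\<forall>t. p m t = (pi - t)/2"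
    and pc: "\<exists>c. \<forall>t. p (m-1) t = t*(2*pi - t)/4 + c"
    using construct_p[OF m1] by blast
  obtain c0 where c0: "\<And>t. p (m-1) t = t*(2*pi - t)/4 + c0" using pc by blast
  define y1 where "y1 = y 1"
  define f where "f = (\<lambda>x. p 0 (tau y1 x))"
  have s1: "s \<ge> 1" and ydec: "\<And>i. i < 2 * s \<Longrightarrow> y (Suc i) < y i" and y0: "y 0 = y (2 * s) + 2*pi"
    using assms(2) unfolding admissible_Y_def by auto
  have y21: "y 2 < y1" using ydec[of 1] s1 by (simp add: y1_def numeral_2_eq_2)
  have y10: "y1 < y 0" using ydec[of 0] s1 by (simp add: y1_def)
  have y2s: "y (2 * s) \<le> y 2" using y_mono[OF assms(2), of 2 "2 * s"] s1 by simp
  have y0lt: "y 0 < y1 + 2*pi" using y0 y2s y21 by simp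
  have ygt: "y (2 * s) > y1 - 2*pi" using y0 y10 by simp
  have lip: "\<bar>p (m-1) (tau y1 u) - p (m-1) (tau y1 l)\<bar> \<le> 2 * \<bar>u - l\<bar>" for u l
    unfolding c0 using phi_lip[of y1 u l] by simp
  have cont_m1: "continuous_on UNIV (\<lambda>x. p (m-1) (tau y1 x))"
  proof (rule lipschitz_on_continuous_on)
    show "lipschitz_on 2 UNIV (\<lambda>x. p (m-1) (tau y1 x))"
      by (rule lipschitz_onI) (use lip in \<open>auto simp: dist_real_def simp del: One_nat_def\<close>)
  qed
  have fcont: "continuous_on UNIV f"
  proof (cases "m = 1")
    case True then show ?thesis using cont_m1 by (simp add: f_def)
  next
    case False
    have "isCont f x" for x
    proof -
      have "((\<lambda>x. p 0 (tau y1 x)) has_real_derivative p (Suc 0) (tau y1 x)) (at x)"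
        by (rule F_deriv[OF pd pp]) (use False m1 in auto)
      then show ?thesis unfolding f_def by (rule DERIV_isCont)
    qed
    then show ?thesis by (simp add: continuous_at_imp_continuous_on)
  qed
  have fper: "periodic_2pi f" using tau_periodic by (simp add: periodic_2pi_def f_def)
  have fDelta: "f \<in> Delta q s y"
    unfolding Delta_def mem_Collect_eq
  proof (intro conjI ballI fcont fper)
    fix i assume i: "i \<in> {1..2 * s}"
    define ci where "ci = (if i = 1 then y1 else y1 - 2*pi)"
    define \<sigma> where "\<sigma> = ((-1::real) ^ (i-1))"
    have tau_i: "tau y1 x = x - ci" if "y i < x" "x < y (i-1)" for x
    proof (cases "i = 1")
      case True
      then have "y1 < x" "x < y 0" using that by (auto simp: y1_def)
      then have "tau y1 x = x - y1 - 2*pi * of_int (0::int)" using y0lt by (intro tau_eq) auto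
      then show ?thesis using True by (simp add: ci_def)
    next
      case False
      then have i2: "i \<ge> 2" using i by auto
      have "y (i-1) \<le> y1" using y_mono[OF assms(2), of 1 "i-1"] i i2 by (simp add: y1_def)
      moreover have "y (2 * s) \<le> y i" using y_mono[OF assms(2), of i "2 * s"] i by simp
      ultimately have "y1 - 2*pi < x" "x < y1" using that ygt by auto
      then have "tau y1 x = x - y1 - 2*pi * of_int (-1::int)" by (intro tau_eq) auto
      then show ?thesis using False by (simp add: ci_def)
    qed
    define D where "D = (\<lambda>k x. \<sigma> * p k (x - ci))"
    have c1: "continuous_on {y i..y (i-1)} (\<lambda>x. (-1) ^ (i-1) * f x)"
      using fcont by (auto intro!: continuous_intros intro: continuous_on_subset)
    have c2: "\<forall>x\<in>{y i<..<y (i-1)}. D 0 x = (-1) ^ (i-1) * f x"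
      using tau_i by (auto simp: f_def \<sigma>_def D_def)
    have c3: "\<forall>k<q-2. \<forall>x\<in>{y i<..<y (i-1)}. (D k has_real_derivative D (Suc k) x) (at x)"
    proof (intro allI impI ballI)
      fix k x assume "k < q - 2"
      then have "(p k has_real_derivative p (Suc k) (x - ci)) (at (x - ci))" using pd by (simp add: m_def)
      then have "((\<lambda>x. p k (x - ci)) has_real_derivative p (Suc k) (x - ci)) (at x)" by (rule deriv_shift_sub)
      then show "(D k has_real_derivative D (Suc k) x) (at x)" unfolding D_def by (rule DERIV_cmult)
    qed
    have Dm: "D (q-2) = (\<lambda>x. (-\<sigma>/2) * x + \<sigma> * (pi + ci)/2)"
    proof (rule ext)
      fix x
      have e: "p (q-2) (x - ci) = (pi - (x - ci))/2" using pm by (simp add: m_def)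
      show "D (q-2) x = (-\<sigma>/2) * x + \<sigma> * (pi + ci)/2" unfolding D_def e by (simp add: field_simps)
    qed
    have c4: "continuous_on {y i<..<y (i-1)} (D (q-2))" unfolding Dm by (intro continuous_intros)
    have c5: "convex_on {y i<..<y (i-1)} (D (q-2))" unfolding Dm by (intro affine_convex) simp
    show "q_monotone_on q (y i) (y (i-1)) (\<lambda>x. (-1) ^ (i-1) * f x)"
      unfolding q_monotone_on_def using c1 c2 c3 c4 c5 by blast
  qed
  have fW: "f \<in> W (q - 2)"
    unfolding W_def mem_Collect_eq
  proof (intro conjI fper)
    define D' where "D' = (\<lambda>k x. p k (tau y1 x))"
    have w1: "D' 0 = f" by (simp add: D'_def f_def)
    have w2: "\<forall>k<q-2-1. \<forall>x. (D' k has_real_derivative D' (Suc k) x) (at x)"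
    proof (intro allI impI)
      fix k x assume "k < q-2-1"
      then show "(D' k has_real_derivative D' (Suc k) x) (at x)"
        unfolding D'_def by (intro F_deriv[OF pd pp]) (auto simp: m_def)
    qed
    have w3: "locally_abs_cont (D' (q-2-1))"
      unfolding locally_abs_cont_def abs_cont_on_def
    proof (intro allI impI)
      fix a b \<epsilon> :: real assume "\<epsilon> > 0"
      show "\<exists>\<delta>>0. \<forall>(n::nat) (l::nat \<Rightarrow> real) (u::nat \<Rightarrow> real).
        (\<forall>k<n. a \<le> l k \<and> l k \<le> u k \<and> u k \<le> b) \<and>
        (\<forall>j<n. \<forall>k<n. j \<noteq> k \<longrightarrow> u j \<le> l k \<or> u k \<le> l j) \<and>
        (\<Sum>k<n. u k - l k) < \<delta> \<longrightarrow>
        (\<Sum>k<n. \<bar>D' (q-2-1) (u k) - D' (q-2-1) (l k)\<bar>) < \<epsilon>"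
      proof (intro exI[of _ "\<epsilon>/2"] conjI allI impI)
        show "\<epsilon>/2 > 0" using \<open>\<epsilon> > 0\<close> by simp
        fix n :: nat and l u :: "nat \<Rightarrow> real"
        assume H: "(\<forall>k<n. a \<le> l k \<and> l k \<le> u k \<and> u k \<le> b) \<and>
          (\<forall>j<n. \<forall>k<n. j \<noteq> k \<longrightarrow> u j \<le> l k \<or> u k \<le> l j) \<and> (\<Sum>k<n. u k - l k) < \<epsilon>/2"
        have "(\<Sum>k<n. \<bar>D' (q-2-1) (u k) - D' (q-2-1) (l k)\<bar>) \<le> (\<Sum>k<n. 2 * (u k - l k))"
        proof (rule sum_mono)
          fix k assume "k \<in> {..<n}"
          then have "l k \<le> u k" using H by auto
          then show "\<bar>D' (q-2-1) (u k) - D' (q-2-1) (l k)\<bar> \<le> 2 * (u k - l k)"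
            using lip[of "u k" "l k"] unfolding D'_def m_def by simp
        qed
        also have "\<dots> = 2 * (\<Sum>k<n. u k - l k)" by (simp add: sum_distrib_left)
        also have "\<dots> < \<epsilon>" using H by simp
        finally show "(\<Sum>k<n. \<bar>D' (q-2-1) (u k) - D' (q-2-1) (l k)\<bar>) < \<epsilon>" .
      qed
    qed
    have "AE x in lborel. x \<notin> range (\<lambda>N::int. y1 + 2*pi * of_int N)"
      by (rule AE_not_in) (intro countable_imp_null_set_lborel countable_image, simp)
    then have w4: "AE x in lborel. \<exists>d. (D' (q-2-1) has_real_derivative d) (at x) \<and> \<bar>d\<bar> \<le> 2"
    proof (rule eventually_mono)
      fix x assume x: "x \<notin> range (\<lambda>N::int. y1 + 2*pi * of_int N)"
      have "(D' (m-1) has_real_derivative p (Suc (m-1)) (tau y1 x)) (at x)"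
        unfolding D'_def by (rule F_deriv[OF pd pp]) (use m1 x in auto)
      moreover have "p (Suc (m-1)) (tau y1 x) = (pi - tau y1 x)/2" using pm m1 by simp
      moreover have "\<bar>(pi - tau y1 x)/2\<bar> \<le> 2" using tau_range[of y1 x] pi_less_4 pi_gt3 by auto
      ultimately show "\<exists>d. (D' (q-2-1) has_real_derivative d) (at x) \<and> \<bar>d\<bar> \<le> 2"
        unfolding m_def by auto
    qed
    show "\<exists>D :: nat \<Rightarrow> real \<Rightarrow> real.
        D 0 = f \<and>
        (\<forall>k<q-2-1. \<forall>x. (D k has_real_derivative D (Suc k) x) (at x)) \<and>
        locally_abs_cont (D (q-2-1)) \<and>
        (AE x in lborel. \<exists>d. (D (q-2-1) has_real_derivative d) (at x) \<and> \<bar>d\<bar> \<le> 2)"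
      using w1 w2 w3 w4 by blast
  qed
  define \<delta>0 where "\<delta>0 = min (y1 - y 2) (y 0 - y1)"
  define H where "H = min (\<delta>0/5) (1/2)"
  define h where "h = H / real m"
  define C where "C = h ^ m / (5 * 2 ^ m)"
  have H: "0 < H" "H \<le> 1/2" "4*H < y1 - y 2" "4*H < y 0 - y1"
    using y21 y10 by (auto simp: H_def \<delta>0_def min_def)
  have h: "h > 0" "real m * h = H" using H m1 by (auto simp: h_def)
  have Cpos: "C > 0" using h by (simp add: C_def)
  have pcont: "continuous_on {0..2*pi} (p 0)"
    using pd m1 by (intro continuous_at_imp_continuous_on ballI DERIV_isCont) (auto intro: DERIV_isCont)
  obtain Bf where Bf: "\<And>t. t \<in> {0..2*pi} \<Longrightarrow> norm (p 0 t) \<le> Bf"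
    using continuous_on_compact_bound[OF compact_Icc pcont] by blast
  have fB: "\<bar>f x\<bar> \<le> Bf" for x
    using Bf[of "tau y1 x"] tau_range[of y1 x] by (simp add: f_def)
  have lower: "C \<le> sup_norm (\<lambda>x. f x - T x)" if tp: "trig_poly n T" and TDel: "T \<in> Delta q s y" for n T
  proof -
    obtain a b where Tab: "\<And>x. T x = a 0 + (\<Sum>k=1..n. a k * cos (real k * x) + b k * sin (real k * x))"
      using tp unfolding trig_poly_def by blast
    have Teq: "T = TD a b n 0" using Tab TD_0 by auto
    define u where "u = TD a b n m"
    have ucont: "isCont u x" for x unfolding u_def by (rule DERIV_isCont[OF TD_deriv])
    have Gd: "\<And>k x. k < m \<Longrightarrow> (TD a b n k has_real_derivative TD a b n (Suc k) x) (at x)"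
      by (rule TD_deriv)
    have Tall: "\<forall>i\<in>{1..2 * s}. q_monotone_on q (y i) (y (i - 1)) (\<lambda>x. (- 1) ^ (i - 1) * T x)"
      using TDel unfolding Delta_def by blast
    have q1: "q_monotone_on q (y 1) (y 0) (\<lambda>x. (-1) ^ 0 * T x)"
    proof -
      have "1 \<in> {1..2 * s}" using s1 by auto
      then have "q_monotone_on q (y 1) (y (1 - 1)) (\<lambda>x. (- 1) ^ (1 - 1) * T x)" using Tall by blast
      then show ?thesis by simp
    qed
    have q2: "q_monotone_on q (y 2) (y 1) (\<lambda>x. (-1) ^ 1 * T x)"
    proof -
      have "2 \<in> {1..2 * s}" using s1 by auto
      moreover have "\<forall>i\<in>{1..2 * s}. q_monotone_on q (y i) (y (i - 1)) (\<lambda>x. (- 1) ^ (i - 1) * T x)"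
        using TDel unfolding Delta_def by blast
      ultimately have "q_monotone_on q (y 2) (y (2 - 1)) (\<lambda>x. (- 1) ^ (2 - 1) * T x)" by blast
      then show ?thesis by simp
    qed
    obtain D1 where D1a: "\<forall>x\<in>{y1<..<y 0}. D1 0 x = T x"
      and D1b: "\<forall>k<m. \<forall>x\<in>{y1<..<y 0}. (D1 k has_real_derivative D1 (Suc k) x) (at x)"
      and D1c: "convex_on {y1<..<y 0} (D1 m)"
      using q1 unfolding q_monotone_on_def m_def y1_def by auto
    have D1a': "\<And>x. x \<in> {y1<..<y 0} \<Longrightarrow> D1 0 x = 1 * TD a b n 0 x" using D1a Teq by simp
    have D1b': "\<And>k x. k < m \<Longrightarrow> x \<in> {y1<..<y 0} \<Longrightarrow> (D1 k has_real_derivative D1 (Suc k) x) (at x)"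
      using D1b by blast
    have "D1 m x = 1 * TD a b n m x" if "x \<in> {y1<..<y 0}" for x
      using deriv_family_unique[OF open_greaterThanLessThan D1a' D1b' Gd order.refl that] .
    then have convR: "convex_on {y1<..<y 0} u"
      using convex_on_eq[OF D1c, of u] by (simp add: u_def)
    obtain D2 where D2a: "\<forall>x\<in>{y 2<..<y1}. D2 0 x = - T x"
      and D2b: "\<forall>k<m. \<forall>x\<in>{y 2<..<y1}. (D2 k has_real_derivative D2 (Suc k) x) (at x)"
      and D2c: "convex_on {y 2<..<y1} (D2 m)"
      using q2 unfolding q_monotone_on_def m_def y1_def by auto
    have D2a': "\<And>x. x \<in> {y 2<..<y1} \<Longrightarrow> D2 0 x = (-1) * TD a b n 0 x" using D2a Teq by simp
    have D2b': "\<And>k x. k < m \<Longrightarrow> x \<in> {y 2<..<y1} \<Longrightarrow> (D2 k has_real_derivative D2 (Suc k) x) (at x)"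
      using D2b by blast
    have "D2 m x = (-1) * TD a b n m x" if "x \<in> {y 2<..<y1}" for x
      using deriv_family_unique[OF open_greaterThanLessThan D2a' D2b' Gd order.refl that] .
    then have convL: "convex_on {y 2<..<y1} (\<lambda>x. - u x)"
      using convex_on_eq[OF D2c, of "\<lambda>x. - u x"] by (simp add: u_def)
    obtain BT where BT: "\<And>x. \<bar>TD a b n 0 x\<bar> \<le> BT" using TD_bound by blast
    define e where "e = sup_norm (\<lambda>x. f x - T x)"
    have bdd: "bdd_above (range (\<lambda>x. \<bar>f x - T x\<bar>))"
    proof (rule bdd_aboveI2)
      fix x show "\<bar>f x - T x\<bar> \<le> Bf + BT" using fB[of x] BT[of x] Teq by auto
    qed
    have ele: "\<bar>f x - T x\<bar> \<le> e" for x
      unfolding e_def sup_norm_def by (rule cSUP_upper) (simp_all add: bdd)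
    have e0: "0 \<le> e" using ele[of 0] by simp
    have fd: "\<bar>h ^ m * v - h ^ m * w\<bar> \<le> 2 ^ m * e"
      if "fdiff m h f x = h ^ m * v" "fdiff m h T x = h ^ m * w" for x v w
      using fdiff_bound[of "\<lambda>z. f z - T z" e m h x] ele fdiff_diff[of m h f T x] that by simp
    have Tmvt: "\<exists>\<xi>. x \<le> \<xi> \<and> \<xi> \<le> x + H \<and> fdiff m h T x = h ^ m * u \<xi>" for x
      using fdiff_mvt[of h m "TD a b n" x] TD_deriv h Teq u_def by auto
    have fshift: "\<exists>\<xi>. x \<le> \<xi> \<and> \<xi> \<le> x + H \<and> fdiff m h f x = h ^ m * ((pi - (\<xi> - c))/2)"
      if fc: "\<And>z. x \<le> z \<Longrightarrow> z \<le> x + H \<Longrightarrow> f z = p 0 (z - c)" for x c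
    proof -
      have "fdiff m h f x = fdiff m h (\<lambda>z. p 0 (z - c)) x"
        by (rule fdiff_local) (use h fc in auto)
      moreover have dd: "\<And>k w. k < m \<Longrightarrow> ((\<lambda>z. p k (z - c)) has_real_derivative p (Suc k) (w - c)) (at w)"
        using pd by (intro deriv_shift_sub) auto
      have "\<exists>\<xi>. x \<le> \<xi> \<and> \<xi> \<le> x + real m * h \<and> fdiff m h ((\<lambda>k z. p k (z - c)) 0) x = h ^ m * (\<lambda>k z. p k (z - c)) m \<xi>"
        by (rule fdiff_mvt) (use h dd in auto)
      ultimately show ?thesis using pm h by auto
    qed
    define \<eta> where "\<eta> = 2 ^ m * e / h ^ m"
    have hm: "h ^ m > 0" using h by simp
    have eta0: "0 \<le> \<eta>" using e0 hm by (simp add: \<eta>_def)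
    obtain \<xi>3 where \<xi>3: "y1 + H \<le> \<xi>3" "\<xi>3 \<le> y1 + H + H" "fdiff m h T (y1 + H) = h ^ m * u \<xi>3"
      using Tmvt[of "y1 + H"] by blast
    obtain \<xi>4 where \<xi>4: "y1 + 3*H \<le> \<xi>4" "\<xi>4 \<le> y1 + 3*H + H" "fdiff m h T (y1 + 3*H) = h ^ m * u \<xi>4"
      using Tmvt[of "y1 + 3*H"] by blast
    obtain \<xi>2 where \<xi>2: "y1 - 2*H \<le> \<xi>2" "\<xi>2 \<le> y1 - 2*H + H" "fdiff m h T (y1 - 2*H) = h ^ m * u \<xi>2"
      using Tmvt[of "y1 - 2*H"] by blast
    obtain \<xi>1 where \<xi>1: "y1 - 4*H \<le> \<xi>1" "\<xi>1 \<le> y1 - 4*H + H" "fdiff m h T (y1 - 4*H) = h ^ m * u \<xi>1"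
      using Tmvt[of "y1 - 4*H"] by blast
    have fR: "f z = p 0 (z - y1)" if "y1 \<le> z" "z < y1 + 2*pi" for z
    proof -
      have "tau y1 z = z - y1 - 2*pi * of_int (0::int)" using that by (intro tau_eq) auto
      then show ?thesis by (simp add: f_def)
    qed
    have fL: "f z = p 0 (z - (y1 - 2*pi))" if "y1 - 2*pi \<le> z" "z < y1" for z
    proof -
      have "tau y1 z = z - y1 - 2*pi * of_int (-1::int)" using that by (intro tau_eq) auto
      then have "tau y1 z = z - (y1 - 2*pi)" by simp
      then show ?thesis by (simp add: f_def)
    qed
    have H2: "4 * H < 2 * pi" using H pi_gt3 by simp
    have "\<And>z. y1 + H \<le> z \<Longrightarrow> z \<le> y1 + H + H \<Longrightarrow> f z = p 0 (z - y1)" using fR H H2 by auto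
    from fshift[OF this] obtain \<zeta>3 where \<zeta>3: "y1 + H \<le> \<zeta>3" "\<zeta>3 \<le> y1 + H + H"
      "fdiff m h f (y1 + H) = h ^ m * ((pi - (\<zeta>3 - y1))/2)" by blast
    have "\<And>z. y1 + 3*H \<le> z \<Longrightarrow> z \<le> y1 + 3*H + H \<Longrightarrow> f z = p 0 (z - y1)" using fR H H2 by auto
    from fshift[OF this] obtain \<zeta>4 where \<zeta>4: "y1 + 3*H \<le> \<zeta>4" "\<zeta>4 \<le> y1 + 3*H + H"
      "fdiff m h f (y1 + 3*H) = h ^ m * ((pi - (\<zeta>4 - y1))/2)" by blast
    have "\<And>z. y1 - 2*H \<le> z \<Longrightarrow> z \<le> y1 - 2*H + H \<Longrightarrow> f z = p 0 (z - (y1 - 2*pi))" using fL H H2 by auto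
    from fshift[OF this] obtain \<zeta>2 where \<zeta>2: "y1 - 2*H \<le> \<zeta>2" "\<zeta>2 \<le> y1 - 2*H + H"
      "fdiff m h f (y1 - 2*H) = h ^ m * ((pi - (\<zeta>2 - (y1 - 2*pi)))/2)" by blast
    have "\<And>z. y1 - 4*H \<le> z \<Longrightarrow> z \<le> y1 - 4*H + H \<Longrightarrow> f z = p 0 (z - (y1 - 2*pi))" using fL H H2 by auto
    from fshift[OF this] obtain \<zeta>1 where \<zeta>1: "y1 - 4*H \<le> \<zeta>1" "\<zeta>1 \<le> y1 - 4*H + H"
      "fdiff m h f (y1 - 4*H) = h ^ m * ((pi - (\<zeta>1 - (y1 - 2*pi)))/2)" by blast
    have d3: "\<bar>(pi - (\<zeta>3 - y1))/2 - u \<xi>3\<bar> \<le> \<eta>"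
      unfolding \<eta>_def by (rule abs_div_helper[OF hm fd[OF \<zeta>3(3) \<xi>3(3)]])
    have d4: "\<bar>(pi - (\<zeta>4 - y1))/2 - u \<xi>4\<bar> \<le> \<eta>"
      unfolding \<eta>_def by (rule abs_div_helper[OF hm fd[OF \<zeta>4(3) \<xi>4(3)]])
    have d2: "\<bar>(pi - (\<zeta>2 - (y1 - 2*pi)))/2 - u \<xi>2\<bar> \<le> \<eta>"
      unfolding \<eta>_def by (rule abs_div_helper[OF hm fd[OF \<zeta>2(3) \<xi>2(3)]])
    have d1: "\<bar>(pi - (\<zeta>1 - (y1 - 2*pi)))/2 - u \<xi>1\<bar> \<le> \<eta>"
      unfolding \<eta>_def by (rule abs_div_helper[OF hm fd[OF \<zeta>1(3) \<xi>1(3)]])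
    have R: "0 \<le> (\<xi>4 - \<xi>3) * u y1 + (\<xi>3 - y1) * u \<xi>4 - (\<xi>4 - y1) * u \<xi>3"
    proof -
      have "0 \<le> (\<lambda>z. (\<xi>4 - \<xi>3) * u z + (\<xi>3 - z) * u \<xi>4 - (\<xi>4 - z) * u \<xi>3) y1"
      proof (rule limit_right_ge[where \<Phi> = "\<lambda>z. (\<xi>4 - \<xi>3) * u z + (\<xi>3 - z) * u \<xi>4 - (\<xi>4 - z) * u \<xi>3" and c = y1 and d = \<xi>3])
        show "isCont (\<lambda>z. (\<xi>4 - \<xi>3) * u z + (\<xi>3 - z) * u \<xi>4 - (\<xi>4 - z) * u \<xi>3) y1"
          by (intro continuous_intros ucont)
        show "y1 < \<xi>3" using \<xi>3 H by simp
        fix z assume z: "y1 < z" "z < \<xi>3"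
        have "(\<xi>4 - z) * u \<xi>3 \<le> (\<xi>4 - \<xi>3) * u z + (\<xi>3 - z) * u \<xi>4"
          by (rule convex_three[OF convR]) (use z \<xi>3 \<xi>4 H in auto)
        then show "0 \<le> (\<lambda>z. (\<xi>4 - \<xi>3) * u z + (\<xi>3 - z) * u \<xi>4 - (\<xi>4 - z) * u \<xi>3) z" by simp
      qed
      then show ?thesis by simp
    qed
    have L: "0 \<le> (\<xi>2 - \<xi>1) * (- u y1) + (y1 - \<xi>2) * (- u \<xi>1) - (y1 - \<xi>1) * (- u \<xi>2)"
    proof -
      have "0 \<le> (\<lambda>z. (\<xi>2 - \<xi>1) * (- u z) + (z - \<xi>2) * (- u \<xi>1) - (z - \<xi>1) * (- u \<xi>2)) y1"
      proof (rule limit_left_ge[where \<Phi> = "\<lambda>z. (\<xi>2 - \<xi>1) * (- u z) + (z - \<xi>2) * (- u \<xi>1) - (z - \<xi>1) * (- u \<xi>2)" and c = y1 and d = \<xi>2])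
        show "isCont (\<lambda>z. (\<xi>2 - \<xi>1) * (- u z) + (z - \<xi>2) * (- u \<xi>1) - (z - \<xi>1) * (- u \<xi>2)) y1"
          by (intro continuous_intros ucont)
        show "\<xi>2 < y1" using \<xi>2 H by simp
        fix z assume z: "\<xi>2 < z" "z < y1"
        have "(z - \<xi>1) * (- u \<xi>2) \<le> (z - \<xi>2) * (- u \<xi>1) + (\<xi>2 - \<xi>1) * (- u z)"
          by (rule convex_three[OF convL]) (use z \<xi>1 \<xi>2 H in auto)
        then show "0 \<le> (\<lambda>z. (\<xi>2 - \<xi>1) * (- u z) + (z - \<xi>2) * (- u \<xi>1) - (z - \<xi>1) * (- u \<xi>2)) z" by simp
      qed
      then show ?thesis by simp
    qed
    have fin: "pi - 2*H \<le> 10 * \<eta>"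
    proof (rule final_arith[OF H(1) H(2) eta0 R L d1 d2 d3 d4])
      show "(pi - (\<zeta>4 - y1)) / 2 \<le> (pi - (\<zeta>3 - y1)) / 2" using \<zeta>3 \<zeta>4 by simp
      show "(pi - (\<zeta>2 - (y1 - 2 * pi))) / 2 \<le> (pi - (\<zeta>1 - (y1 - 2 * pi))) / 2" using \<zeta>1 \<zeta>2 H by simp
      show "(pi - 2 * H) / 2 \<le> (pi - (\<zeta>3 - y1)) / 2" using \<zeta>3 by simp
      show "(pi - (\<zeta>2 - (y1 - 2 * pi))) / 2 \<le> (- pi + 2 * H) / 2" using \<zeta>2 by simp
    qed (use \<xi>1 \<xi>2 \<xi>3 \<xi>4 H in auto)
    have "1/5 \<le> \<eta>" using fin H pi_gt3 by simp
    then have "h ^ m / 5 \<le> 2 ^ m * e" using hm by (simp add: \<eta>_def pos_le_divide_eq)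
    then show ?thesis unfolding e_def[symmetric] C_def by (simp add: field_simps)
  qed
  show ?thesis
  proof (intro exI[of _ f] conjI fDelta fW exI[of _ C] Cpos allI impI)
    fix n :: nat assume "1 \<le> n"
    show "C \<le> E_shape n q s y f"
      unfolding E_shape_def
    proof (rule cINF_greatest)
      have "trig_poly n (\<lambda>x. 0)" unfolding trig_poly_def
        by (rule exI[of _ "\<lambda>k. 0"], rule exI[of _ "\<lambda>k. 0"]) simp
      then show "{T. trig_poly n T \<and> T \<in> Delta q s y} \<noteq> {}" using zero_Delta by blast
      fix T assume "T \<in> {T. trig_poly n T \<and> T \<in> Delta q s y}"
      then show "C \<le> sup_norm (\<lambda>x. f x - T x)" using lower by blast
    qed
  qed
qed
end
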